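(* Let $n, m$ be positive integers and $\alpha \in (0,1)$. Form a random $m \times n$ array of zeros and ones in which each of the $mn$ entries is independently equal to $1$ with probability $\alpha$ and to $0$ with probability $1-\alpha$. Let $X$ be the number of deficient sets of three rows. Put $$p_n(\alpha) = (1-\alpha^3)^n + 3\bigl(1-\alpha^2(1-\alpha)\bigr)^n, \qquad \zeta(n) = \sqrt{\frac{2}{3e}}\left(\frac{1}{p_n(\alpha)}\right)^{1/2}.$$ If $m \le \zeta(n)$, then $\mathbb{P}(X=0) > 0$. Consequently, the largest number of rows in a $\mathcal{C}(n,2,3,A,1)$ partial covering array, with each row having expected weight $k=\alpha n$ in this random model, is at least $\zeta(n)$.
   Context: Let $A = \{(0,1,1),(1,0,1),(1,1,0),(1,1,1)\}$. A set of three rows of a $0$-$1$ array is called deficient if at least one of the four vectors in $A$ does not appear among the columns of the $3 \times n$ subarray formed by those three rows (in the sense that for some vector in $A$ no column, restricted to the three rows, equals it). A partial covering array $\mathcal{C}(n,2,3,A,1)$ is an $m\times n$ $0$-$1$ array such that for every choice of three rows, each vector of $A$ appears at least once among the columns of the selected rows; equivalently, no set of three rows is deficient. (Equivalently, viewing rows as subsets of an $n$-set, for any three rows $A',B',C'$ the sets $A'\cap B'\cap C'$, $A'\cap B'\cap C'^{c}$, $A'\cap B'^{c}\cap C'$, $A'^{c}\cap B'\cap C'$ are all nonempty.) *)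

theory Defs
  imports "HOL-Probability.Probability"
begin

text \<open>A 0-1 array with m rows and n columns is modelled as a function
  M :: nat \<times> nat \<Rightarrow> bool, where M (r, c) is the entry in row r < m,
  column c < n (True = 1, False = 0); entries outside the range are irrelevant.\<close>

definition vecA :: "(bool \<times> bool \<times> bool) set" where
  "vecA = {(False, True, True), (True, False, True), (True, True, False), (True, True, True)}"

definition deficient :: "(nat \<times> nat \<Rightarrow> bool) \<Rightarrow> nat \<Rightarrow> nat \<Rightarrow> nat \<Rightarrow> nat \<Rightarrow> bool" where
  "deficient M n i j k \<longleftrightarrow> (\<exists>v\<in>vecA. \<not> (\<exists>c<n. (M (i, c), M (j, c), M (k, c)) = v))"

definition deficient_sets :: "(nat \<times> nat \<Rightarrow> bool) \<Rightarrow> nat \<Rightarrow> nat \<Rightarrow> (nat \<times> nat \<times> nat) set" where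
  "deficient_sets M m n = {(i, j, k). i < j \<and> j < k \<and> k < m \<and> deficient M n i j k}"

definition num_deficient :: "(nat \<times> nat \<Rightarrow> bool) \<Rightarrow> nat \<Rightarrow> nat \<Rightarrow> nat" where
  "num_deficient M m n = card (deficient_sets M m n)"

definition is_PCA :: "(nat \<times> nat \<Rightarrow> bool) \<Rightarrow> nat \<Rightarrow> nat \<Rightarrow> bool" where
  "is_PCA M m n \<longleftrightarrow> (\<forall>i j k. i < j \<and> j < k \<and> k < m \<longrightarrow> \<not> deficient M n i j k)"

definition random_array :: "nat \<Rightarrow> nat \<Rightarrow> real \<Rightarrow> (nat \<times> nat \<Rightarrow> bool) pmf" where
  "random_array m n \<alpha> = Pi_pmf ({0..<m} \<times> {0..<n}) False (\<lambda>_. bernoulli_pmf \<alpha>)"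

definition p_n :: "nat \<Rightarrow> real \<Rightarrow> real" where
  "p_n n \<alpha> = (1 - \<alpha> ^ 3) ^ n + 3 * (1 - \<alpha> ^ 2 * (1 - \<alpha>)) ^ n"

definition zeta :: "nat \<Rightarrow> real \<Rightarrow> real" where
  "zeta n \<alpha> = sqrt (2 / (3 * exp 1)) * (1 / p_n n \<alpha>) powr (1/2)"

end

theory Submission imports Defs begin

definition qb :: "real \<Rightarrow> bool \<Rightarrow> real" where
  "qb \<alpha> b = (if b then \<alpha> else 1 - \<alpha>)"

definition colp :: "nat \<Rightarrow> real \<Rightarrow> (nat \<Rightarrow> bool) pmf" where
  "colp N \<alpha> = Pi_pmf {0..<N} False (\<lambda>_. bernoulli_pmf \<alpha>)"

definition arrp :: "nat \<Rightarrow> nat \<Rightarrow> real \<Rightarrow> (nat \<Rightarrow> nat \<Rightarrow> bool) pmf" where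
  "arrp N n \<alpha> = Pi_pmf {0..<n} (\<lambda>_. False) (\<lambda>_. colp N \<alpha>)"

lemma col_prob:
  assumes "i < N" "j < N" "k < N" "i \<noteq> j" "i \<noteq> k" "j \<noteq> k" "0 \<le> \<alpha>" "\<alpha> \<le> 1"
  shows "measure_pmf.prob (colp N \<alpha>) {col. (col i, col j, col k) = (a, b, c)}
          = qb \<alpha> a * qb \<alpha> b * qb \<alpha> c"
proof -
  define B where "B x = (if x = i then {a} else if x = j then {b} else if x = k then {c} else UNIV)" for x
  have iff: "col \<in> Pi {0..<N} B \<longleftrightarrow> (col i, col j, col k) = (a, b, c)" for col
  proof
    assume h: "col \<in> Pi {0..<N} B"
    have "col i \<in> B i" "col j \<in> B j" "col k \<in> B k"
      using h assms(1-3) by (simp_all add: Pi_iff)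
    thus "(col i, col j, col k) = (a, b, c)" using assms(4-6) by (simp add: B_def)
  next
    assume h: "(col i, col j, col k) = (a, b, c)"
    show "col \<in> Pi {0..<N} B"
    proof (rule Pi_I)
      fix x show "col x \<in> B x" using h by (simp add: B_def)
    qed
  qed
  have S: "{col. (col i, col j, col k) = (a, b, c)} = Pi {0..<N} B"
    by (rule set_eqI) (simp only: iff mem_Collect_eq)
  have "measure_pmf.prob (colp N \<alpha>) {col. (col i, col j, col k) = (a, b, c)}
      = (\<Prod>x\<in>{0..<N}. measure_pmf.prob (bernoulli_pmf \<alpha>) (B x))"
    unfolding S colp_def by (rule measure_Pi_pmf_Pi) simp
  also have "\<dots> = (\<Prod>x\<in>{i,j,k}. measure_pmf.prob (bernoulli_pmf \<alpha>) (B x))"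
  proof (rule prod.mono_neutral_right)
    show "finite {0..<N}" by simp
    show "{i, j, k} \<subseteq> {0..<N}" using assms(1-3) by simp
    show "\<forall>x\<in>{0..<N} - {i, j, k}. measure_pmf.prob (bernoulli_pmf \<alpha>) (B x) = 1"
      by (simp add: B_def)
  qed
  also have "\<dots> = qb \<alpha> a * qb \<alpha> b * qb \<alpha> c"
    using assms by (simp add: B_def measure_pmf_single qb_def)
  finally show ?thesis .
qed

lemma arr_prob:
  assumes "i < N" "j < N" "k < N" "i \<noteq> j" "i \<noteq> k" "j \<noteq> k" "0 \<le> \<alpha>" "\<alpha> \<le> 1"
  shows "measure_pmf.prob (arrp N n \<alpha>) {C. \<forall>c<n. (C c i, C c j, C c k) \<noteq> (a, b, d)}
          = (1 - qb \<alpha> a * qb \<alpha> b * qb \<alpha> d) ^ n"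
proof -
  have "{C. \<forall>c<n. (C c i, C c j, C c k) \<noteq> (a, b, d)}
        = Pi {0..<n} (\<lambda>_. UNIV - {col. (col i, col j, col k) = (a, b, d)})"
    by (auto simp: Pi_def)
  hence "measure_pmf.prob (arrp N n \<alpha>) {C. \<forall>c<n. (C c i, C c j, C c k) \<noteq> (a, b, d)}
     = (\<Prod>x\<in>{0..<n}. measure_pmf.prob (colp N \<alpha>) (UNIV - {col. (col i, col j, col k) = (a, b, d)}))"
    by (simp add: arrp_def measure_Pi_pmf_Pi)
  also have "\<dots> = (\<Prod>x\<in>{0..<n}. 1 - qb \<alpha> a * qb \<alpha> b * qb \<alpha> d)"
    using col_prob[OF assms, of a b d]
      measure_pmf.prob_compl[of "{col. (col i, col j, col k) = (a, b, d)}" "colp N \<alpha>"] by simp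
  finally show ?thesis by simp
qed

definition arr :: "(nat \<Rightarrow> nat \<Rightarrow> bool) \<Rightarrow> nat \<times> nat \<Rightarrow> bool" where
  "arr C = (\<lambda>(r, c). C c r)"

lemma def_prob:
  assumes "i < N" "j < N" "k < N" "i \<noteq> j" "i \<noteq> k" "j \<noteq> k" "0 \<le> \<alpha>" "\<alpha> \<le> 1"
  shows "measure_pmf.prob (arrp N n \<alpha>) {C. deficient (arr C) n i j k} \<le> p_n n \<alpha>"
proof -
  let ?E = "\<lambda>v. {C. \<forall>c<n. (C c i, C c j, C c k) \<noteq> v}"
  have "{C. deficient (arr C) n i j k} = (\<Union>v\<in>vecA. ?E v)"
    by (auto simp: deficient_def arr_def)
  moreover have "measure_pmf.prob (arrp N n \<alpha>) (\<Union>v\<in>vecA. ?E v)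
       \<le> (\<Sum>v\<in>vecA. measure_pmf.prob (arrp N n \<alpha>) (?E v))"
    by (rule measure_pmf.finite_measure_subadditive_finite) (auto simp: vecA_def)
  ultimately have "measure_pmf.prob (arrp N n \<alpha>) {C. deficient (arr C) n i j k}
       \<le> (\<Sum>v\<in>vecA. measure_pmf.prob (arrp N n \<alpha>) (?E v))" by simp
  also have "\<dots> = (1 - qb \<alpha> False * qb \<alpha> True * qb \<alpha> True) ^ n
     + (1 - qb \<alpha> True * qb \<alpha> False * qb \<alpha> True) ^ n
     + (1 - qb \<alpha> True * qb \<alpha> True * qb \<alpha> False) ^ n
     + (1 - qb \<alpha> True * qb \<alpha> True * qb \<alpha> True) ^ n"
    unfolding vecA_def
    apply (subst sum.insert, simp, simp)+
    apply (simp only: sum.empty add_0_right arr_prob[OF assms] add.assoc)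
    done
  also have "\<dots> = p_n n \<alpha>"
    by (simp add: qb_def p_n_def power2_eq_square power3_eq_cube algebra_simps)
  finally show ?thesis .
qed


definition dfc :: "nat \<Rightarrow> (nat \<Rightarrow> nat \<Rightarrow> bool) \<Rightarrow> nat \<times> nat \<times> nat \<Rightarrow> bool" where
  "dfc n C t = (case t of (i, j, k) \<Rightarrow> deficient (arr C) n i j k)"

definition trip :: "nat \<Rightarrow> (nat \<times> nat \<times> nat) set" where
  "trip N = {(i, j, k). i < j \<and> j < k \<and> k < N}"

lemma trip_sub: "trip N \<subseteq> {..<N} \<times> {..<N} \<times> {..<N}"
  by (auto simp: trip_def)

lemma finite_trip: "finite (trip N)"
  by (rule finite_subset[OF trip_sub]) auto

lemma card_trip: "2 * card (trip N) \<le> N ^ 3"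
proof -
  let ?sw = "\<lambda>(i::nat, j::nat, k::nat). (j, i, k)"
  have inj: "inj_on ?sw (trip N)" by (auto simp: inj_on_def)
  have c: "card (?sw ` trip N) = card (trip N)" using card_image[OF inj] .
  have disj: "trip N \<inter> ?sw ` trip N = {}" by (auto simp: trip_def)
  have sub: "trip N \<union> ?sw ` trip N \<subseteq> {..<N} \<times> {..<N} \<times> {..<N}"
    using trip_sub by (auto simp: trip_def)
  have "card (trip N \<union> ?sw ` trip N) = card (trip N) + card (?sw ` trip N)"
    by (rule card_Un_disjoint) (use finite_trip disj in auto)
  moreover have "card (trip N \<union> ?sw ` trip N) \<le> card ({..<N} \<times> {..<N} \<times> {..<N})"
    by (rule card_mono[OF _ sub]) auto
  moreover have "card ({..<N} \<times> {..<N} \<times> {..<N}) = N ^ 3"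
    by (simp add: card_cartesian_product power3_eq_cube)
  ultimately show ?thesis using c by simp
qed

lemma e_gt: "exp 1 > (8/3::real)"
proof -
  have "5837465777 / 2147483648 - inverse (2 ^ 32) \<le> exp (1::real)"
    using e_approx_32 by (simp only: abs_le_iff) linarith
  moreover have "(8/3::real) < 5837465777 / 2147483648 - inverse (2 ^ 32)" by simp
  ultimately show ?thesis by linarith
qed

lemma p_pos:
  assumes "0 < \<alpha>" "\<alpha> < 1"
  shows "p_n n \<alpha> > 0"
proof -
  note a = assms
  have p1: "(1 - \<alpha> ^ 3) ^ n > 0"
  proof -
    have "\<alpha> ^ 3 < 1" using a by (simp add: power_less_one_iff)
    thus ?thesis by simp
  qed
  have p2: "(1 - \<alpha> ^ 2 * (1 - \<alpha>)) ^ n \<ge> 0"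
  proof -
    have "\<alpha> ^ 2 \<le> 1" using a by (simp add: power_le_one)
    hence "\<alpha> ^ 2 * (1 - \<alpha>) \<le> 1"
      by (rule mult_le_one) (use a in auto)
    thus ?thesis by simp
  qed
  show ?thesis using p1 p2 by (simp add: p_n_def)
qed

lemma exists_good:
  assumes "0 < \<alpha>" "\<alpha> < 1" "m > 0"
    and mp: "real m ^ 2 * p_n n \<alpha> \<le> 2 / (3 * exp 1)"
  shows "\<exists>C. card {t \<in> trip (2 * m). dfc n C t} < m"
proof (rule ccontr)
  assume H: "\<not> ?thesis"
  let ?P = "arrp (2 * m) n \<alpha>"
  let ?T = "trip (2 * m)"
  define X where "X C = (\<Sum>t\<in>?T. indicator {C. dfc n C t} C :: real)" for C
  have XC: "X C = real (card {t \<in> ?T. dfc n C t})" for C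
    unfolding X_def indicator_def
    by (simp add: sum.inter_filter[symmetric] finite_trip Int_def)
  have int: "integrable (measure_pmf ?P) (\<lambda>C. indicator {C. dfc n C t} C :: real)" for t
    by (intro integrable_real_indicator) (simp_all add: measure_pmf.emeasure_finite less_top[symmetric])
  have "measure_pmf.expectation ?P X = (\<Sum>t\<in>?T. measure_pmf.expectation ?P (\<lambda>C. indicator {C. dfc n C t} C :: real))"
    unfolding X_def by (rule Bochner_Integration.integral_sum) (use int in auto)
  also have "\<dots> = (\<Sum>t\<in>?T. measure_pmf.prob ?P {C. dfc n C t})"
    by simp
  also have "\<dots> \<le> (\<Sum>t\<in>?T. p_n n \<alpha>)"
  proof (rule sum_mono)
    fix t assume "t \<in> ?T"
    then obtain i j k where t: "t = (i, j, k)" "i < j" "j < k" "k < 2 * m"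
      by (auto simp: trip_def)
    show "measure_pmf.prob ?P {C. dfc n C t} \<le> p_n n \<alpha>"
      using def_prob[of i "2*m" j k \<alpha> n] t assms by (simp add: dfc_def)
  qed
  also have "\<dots> = real (card ?T) * p_n n \<alpha>" by simp
  finally have E1: "measure_pmf.expectation ?P X \<le> real (card ?T) * p_n n \<alpha>" .
  have p0: "p_n n \<alpha> \<ge> 0"
    using p_pos[OF assms(1,2), where n=n] by simp
  have "real (2 * card ?T) \<le> real ((2 * m) ^ 3)"
    using card_trip[of "2*m"] by linarith
  hence "real (card ?T) \<le> 4 * real m ^ 3" by simp
  hence "real (card ?T) * p_n n \<alpha> \<le> 4 * real m ^ 3 * p_n n \<alpha>"
    using p0 by (simp add: mult_right_mono)
  also have "\<dots> = 4 * real m * (real m ^ 2 * p_n n \<alpha>)"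
    by (simp add: power2_eq_square power3_eq_cube)
  also have "\<dots> \<le> 4 * real m * (2 / (3 * exp 1))"
    using mp assms by (intro mult_left_mono) auto
  also have "\<dots> < real m"
  proof -
    have "2 / (3 * exp 1) < (1/4::real)"
      using e_gt by (simp add: divide_simps)
    hence "4 * real m * (2 / (3 * exp 1)) < 4 * real m * (1/4)"
      using assms by (intro mult_strict_left_mono) auto
    thus ?thesis by simp
  qed
  finally have E2: "measure_pmf.expectation ?P X < real m"
    using E1 by linarith
  have "real m \<le> measure_pmf.expectation ?P X"
  proof (rule measure_pmf.integral_ge_const)
    show "integrable (measure_pmf ?P) X"
      unfolding X_def by (intro Bochner_Integration.integrable_sum int)
    show "AE x in measure_pmf ?P. real m \<le> X x"
      using H by (auto simp: XC not_less)
  qed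
  with E2 show False by simp
qed

theorem theorem2:
  fixes n m :: nat and \<alpha> :: real
  assumes "n > 0" and "m > 0" and "0 < \<alpha>" and "\<alpha> < 1"
    and "real m \<le> zeta n \<alpha>"
  shows "measure_pmf.prob (random_array m n \<alpha>) {M. num_deficient M m n = 0} > 0
         \<and> (\<exists>M. is_PCA M m n)"
proof -
  note a = assms
  have ppos: "p_n n \<alpha> > 0" using p_pos a by blast
  define c :: real where "c = 2 / (3 * exp 1)"
  have c0: "c > 0" by (simp add: c_def)
  have "zeta n \<alpha> = sqrt c * sqrt (1 / p_n n \<alpha>)"
    using ppos by (simp add: zeta_def c_def powr_half_sqrt)
  also have "\<dots> = sqrt (c / p_n n \<alpha>)"
    by (simp add: real_sqrt_mult[symmetric])
  finally have "real m \<le> sqrt (c / p_n n \<alpha>)" using a by simp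
  hence "real m ^ 2 \<le> (sqrt (c / p_n n \<alpha>)) ^ 2"
    by (intro power_mono) auto
  also have "\<dots> = c / p_n n \<alpha>" using c0 ppos by simp
  finally have "real m ^ 2 * p_n n \<alpha> \<le> c"
    using ppos by (simp add: pos_le_divide_eq)
  hence mp: "real m ^ 2 * p_n n \<alpha> \<le> 2 / (3 * exp 1)"
    by (simp only: c_def)
  obtain C where C: "card {t \<in> trip (2 * m). dfc n C t} < m"
    using exists_good[OF a(3,4,2) mp] by blast
  define D where "D = {t \<in> trip (2 * m). dfc n C t}"
  define S where "S = (\<lambda>(i::nat, j::nat, k::nat). k) ` D"
  have fD: "finite D" unfolding D_def using finite_trip by simp
  have "card S \<le> card D" unfolding S_def by (rule card_image_le[OF fD])
  hence cS: "card S < m" using C by (simp add: D_def)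
  define R where "R = {0..<2*m} - S"
  have "card R \<ge> card {0..<2*m} - card S"
    unfolding R_def by (rule diff_card_le_card_Diff) (simp add: S_def fD)
  hence "card R \<ge> m" using cS by simp
  then obtain R' where R': "R' \<subseteq> R" "card R' = m" "finite R'"
    by (meson obtain_subset_with_card_n)
  obtain xs where xs: "sorted_wrt (<) xs" "set xs = R'"
    using ex1_sorted_list_for_set_if_finite[OF R'(3)] by blast
  have "distinct xs" using xs(1) strict_sorted_iff by blast
  hence lx: "length xs = m" using distinct_card[of xs] xs(2) R'(2) by simp
  define M' where "M' = (\<lambda>(r, c). if r < m \<and> c < n then C c (xs ! r) else False)"
  have pca: "is_PCA M' m n"
    unfolding is_PCA_def
  proof (intro allI impI notI)
    fix i j k assume ijk: "i < j \<and> j < k \<and> k < m" and dM: "deficient M' n i j k"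
    have ord: "xs ! i < xs ! j" "xs ! j < xs ! k"
      using ijk lx sorted_wrt_nth_less[OF xs(1)] by auto
    have kin: "xs ! k \<in> set xs" using ijk lx by simp
    have inR': "xs ! k \<in> R'" using kin xs(2) by simp
    have inR: "xs ! k \<in> R" using inR' R'(1) by (rule subsetD[rotated])
    have lt: "xs ! k < 2 * m" using inR by (simp add: R_def)
    have eq: "(M' (i, c), M' (j, c), M' (k, c)) = (arr C (xs ! i, c), arr C (xs ! j, c), arr C (xs ! k, c))"
      if "c < n" for c using ijk that by (simp add: M'_def arr_def)
    have "deficient M' n i j k = deficient (arr C) n (xs ! i) (xs ! j) (xs ! k)"
      unfolding deficient_def using eq by auto
    hence "deficient (arr C) n (xs ! i) (xs ! j) (xs ! k)" using dM by simp
    hence "(xs ! i, xs ! j, xs ! k) \<in> D"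
      using ord lt by (simp add: D_def trip_def dfc_def)
    hence "xs ! k \<in> S" unfolding S_def
      by (intro image_eqI[where x="(xs ! i, xs ! j, xs ! k)"]) simp_all
    thus False using inR by (simp add: R_def)
  qed
  have "deficient_sets M' m n = {}"
    using pca by (auto simp: deficient_sets_def is_PCA_def)
  hence nd: "num_deficient M' m n = 0"
    by (simp add: num_deficient_def)
  have "pmf (random_array m n \<alpha>) M' = (\<Prod>x\<in>{0..<m} \<times> {0..<n}. pmf (bernoulli_pmf \<alpha>) (M' x))"
    unfolding random_array_def by (subst pmf_Pi) (auto simp: M'_def)
  also have "\<dots> > 0"
  proof (intro prod_pos ballI)
    fix x show "0 < pmf (bernoulli_pmf \<alpha>) (M' x)"
      using a by (cases "M' x") auto
  qed
  finally have pos: "pmf (random_array m n \<alpha>) M' > 0" .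
  have "pmf (random_array m n \<alpha>) M' = measure_pmf.prob (random_array m n \<alpha>) {M'}"
    by (simp add: measure_pmf_single)
  also have "\<dots> \<le> measure_pmf.prob (random_array m n \<alpha>) {M. num_deficient M m n = 0}"
    using nd by (intro measure_pmf.finite_measure_mono) auto
  finally show ?thesis using pos pca by auto
qed

end
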